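(* Let $F$ be a germ of holomorphic diffeomorphism of $(\mathbb C^2,0)$ of the form $F(x,y)=(x+p(x,y),y+q(x,y))$ with $\min\{\nu(p),\nu(q)\}\ge2$, and let $X=a\frac{\partial}{\partial x}+b\frac{\partial}{\partial y}$ be a formal vector field with $a,b\in\mathbb C[[x,y]]$, $\min\{\nu(a),\nu(b)\}\ge2$, such that $F=\mathrm{Exp}(X)$, i.e. $F=(\exp X(x),\exp X(y))$. Let $\pi:(M,D)\to(\mathbb C^2,0)$ be the blow-up at the origin, let $\tilde F$ be the unique germ of diffeomorphism of $(M,D)$ with $\pi\circ\tilde F=F\circ\pi$ and $\tilde F|_D=\mathrm{id}_D$, and let $\tilde X$ be the formal vector field along $D$ with $D\pi\cdot\tilde X=X\circ\pi$. Then for every characteristic direction $p\in D$ of $F$ we have $$\tilde F_p=\mathrm{Exp}(\tilde X_p),$$ where $\tilde F_p$, $\tilde X_p$ are the germs at $p$ and $\mathrm{Exp}$ is computed in local coordinates $(u,w)$ centered at $p$, i.e. $\mathrm{Exp}(\tilde X_p)=(\exp\tilde X_p(u),\exp\tilde X_p(w))$.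
   Context: $\nu(h)$ is the order of a power series $h$. For a formal vector field $Y$ of order $\ge2$ and a formal series $g$, $\exp Y(g)=\sum_{j\ge0}\frac1{j!}Y^j(g)$ with $Y^0(g)=g$, $Y^{j+1}(g)=Y(Y^j(g))$, the vector field acting as a derivation. Write $F(z)=z+P_k(z)+\cdots$ with $P_j$ homogeneous of degree $j$ and $P_k\not\equiv0$; a characteristic direction of $F$ is $[v]\in\mathbb P^1$ with $P_k(v)=\lambda v$ for some $\lambda\in\mathbb C$, and points of $D=\pi^{-1}(0)\cong\mathbb P^1$ are identified with directions. (At such points $\tilde F_p$ is tangent to the identity and $\tilde X_p$ has order $\ge2$.) *)

theory Defs
  imports "HOL-Analysis.Analysis"
begin

text \<open>Formal power series in two variables, represented by their coefficient
functions: f i j is the coefficient of the monomial x^i y^j.\<close>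

type_synonym ps2 = "nat \<Rightarrow> nat \<Rightarrow> complex"

definition ps_const :: "complex \<Rightarrow> ps2" where
  "ps_const c = (\<lambda>i j. if i = 0 \<and> j = 0 then c else 0)"

definition ps_X :: ps2 where
  "ps_X = (\<lambda>i j. if i = 1 \<and> j = 0 then 1 else 0)"

definition ps_Y :: ps2 where
  "ps_Y = (\<lambda>i j. if i = 0 \<and> j = 1 then 1 else 0)"

definition ps_add :: "ps2 \<Rightarrow> ps2 \<Rightarrow> ps2" where
  "ps_add f g = (\<lambda>i j. f i j + g i j)"

definition ps_sub :: "ps2 \<Rightarrow> ps2 \<Rightarrow> ps2" where
  "ps_sub f g = (\<lambda>i j. f i j - g i j)"

definition ps_mult :: "ps2 \<Rightarrow> ps2 \<Rightarrow> ps2" where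
  "ps_mult f g = (\<lambda>i j. \<Sum>i1\<le>i. \<Sum>j1\<le>j. f i1 j1 * g (i - i1) (j - j1))"

text \<open>Quotient in the ring of formal power series (meaningful when the
denominator is a unit, i.e. has nonzero constant term).\<close>
definition ps_div :: "ps2 \<Rightarrow> ps2 \<Rightarrow> ps2" where
  "ps_div f g = (THE h. ps_mult g h = f)"

text \<open>Division by the first variable (exact when f is divisible by it).\<close>
definition ps_divX :: "ps2 \<Rightarrow> ps2" where
  "ps_divX f = (\<lambda>i j. f (Suc i) j)"

definition ps_dx :: "ps2 \<Rightarrow> ps2" where
  "ps_dx f = (\<lambda>i j. of_nat (Suc i) * f (Suc i) j)"

definition ps_dy :: "ps2 \<Rightarrow> ps2" where
  "ps_dy f = (\<lambda>i j. of_nat (Suc j) * f i (Suc j))"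

definition ps_order_ge :: "ps2 \<Rightarrow> nat \<Rightarrow> bool" where
  "ps_order_ge f k \<longleftrightarrow> (\<forall>i j. i + j < k \<longrightarrow> f i j = 0)"

definition ps_convergent :: "ps2 \<Rightarrow> bool" where
  "ps_convergent f \<longleftrightarrow>
     (\<exists>r>0. (\<lambda>(i, j). norm (f i j) * r ^ (i + j)) summable_on (UNIV :: (nat \<times> nat) set))"

definition vf_apply :: "ps2 \<Rightarrow> ps2 \<Rightarrow> ps2 \<Rightarrow> ps2" where
  "vf_apply a b g = ps_add (ps_mult a (ps_dx g)) (ps_mult b (ps_dy g))"

text \<open>For a vector field of order \<ge> 2 one has
\<nu>(Y^k g) \<ge> k, so the coefficient of x^i y^j only receives contributions from
k \<le> i + j; the formal sum is thus computed coefficientwise by a finite sum.\<close>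
definition vf_exp :: "ps2 \<Rightarrow> ps2 \<Rightarrow> ps2 \<Rightarrow> ps2" where
  "vf_exp a b g = (\<lambda>i j. \<Sum>k\<le>i + j. ((vf_apply a b ^^ k) g) i j / fact k)"

definition homog_eval :: "ps2 \<Rightarrow> nat \<Rightarrow> complex \<Rightarrow> complex \<Rightarrow> complex" where
  "homog_eval f k v1 v2 = (\<Sum>i\<le>k. f i (k - i) * v1 ^ i * v2 ^ (k - i))"

definition homog_zero :: "ps2 \<Rightarrow> nat \<Rightarrow> bool" where
  "homog_zero f k \<longleftrightarrow> (\<forall>i\<le>k. f i (k - i) = 0)"

definition char_direction :: "ps2 \<Rightarrow> ps2 \<Rightarrow> complex \<Rightarrow> complex \<Rightarrow> bool" where
  "char_direction p q v1 v2 \<longleftrightarrow> (v1, v2) \<noteq> (0, 0) \<and>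
     (\<exists>k. \<not> (homog_zero p k \<and> homog_zero q k) \<and>
          (\<forall>m<k. homog_zero p m \<and> homog_zero q m) \<and>
          (\<exists>lam. homog_eval p k v1 v2 = lam * v1 \<and> homog_eval q k v1 v2 = lam * v2))"

text \<open>Chart 1 centred at the direction [1:c]:
  \<pi>(u,w) = (u, u (c + w)).  Chart 2 centred at [0:1]: \<pi>(u,w) = (u w, u).
  Pullback f \<circ> \<pi> as a formal series in (u,w) (first variable u).\<close>
definition pull1 :: "complex \<Rightarrow> ps2 \<Rightarrow> ps2" where
  "pull1 c f = (\<lambda>k l. \<Sum>n\<le>k. f (k - n) n * of_nat (n choose l) * c ^ (n - l))"

definition pull2 :: "ps2 \<Rightarrow> ps2" where
  "pull2 f = (\<lambda>k l. if l \<le> k then f l (k - l) else 0)"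

text \<open>Lift of F = (x+p, y+q) in chart 1 at [1:c]: coordinates
  (x', y'/x' - c) with (x',y') = F \<circ> \<pi>.\<close>
definition lift1_F :: "complex \<Rightarrow> ps2 \<Rightarrow> ps2 \<Rightarrow> ps2 \<times> ps2" where
  "lift1_F c p q =
    (ps_add ps_X (pull1 c p),
     ps_sub (ps_div (ps_divX (pull1 c (ps_add ps_Y q)))
                    (ps_divX (pull1 c (ps_add ps_X p))))
            (ps_const c))"

text \<open>Lift of F in chart 2 at [0:1]: coordinates (y', x'/y').\<close>
definition lift2_F :: "ps2 \<Rightarrow> ps2 \<Rightarrow> ps2 \<times> ps2" where
  "lift2_F p q =
    (ps_add ps_X (pull2 q),
     ps_div (ps_divX (pull2 (ps_add ps_X p))) (ps_divX (pull2 (ps_add ps_Y q))))"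

text \<open>Lift of X = a d/dx + b d/dy: the components (a~, b~) with
  D\<pi> . X~ = X \<circ> \<pi>.\<close>
definition lift1_X :: "complex \<Rightarrow> ps2 \<Rightarrow> ps2 \<Rightarrow> ps2 \<times> ps2" where
  "lift1_X c a b =
    (pull1 c a,
     ps_divX (ps_sub (pull1 c b) (ps_mult (ps_add (ps_const c) ps_Y) (pull1 c a))))"

definition lift2_X :: "ps2 \<Rightarrow> ps2 \<Rightarrow> ps2 \<times> ps2" where
  "lift2_X a b =
    (pull2 b,
     ps_divX (ps_sub (pull2 a) (ps_mult ps_Y (pull2 b))))"

end

theory Submission
  imports Defs "HOL-Computational_Algebra.Formal_Power_Series"
begin

unbundle no vec_syntax
notation fps_nth (infixl \<open>$\<close> 75)

type_synonym R = "complex fps fps"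

definition U :: "R \<Rightarrow> ps2" where "U A = (\<lambda>i j. A $ i $ j)"
definition T :: "ps2 \<Rightarrow> R" where "T f = Abs_fps (\<lambda>i. Abs_fps (\<lambda>j. f i j))"
definition Cst :: "complex \<Rightarrow> R" where "Cst c = fps_const (fps_const c)"
definition Yv :: R where "Yv = fps_const fps_X"
definition Dy :: "R \<Rightarrow> R" where "Dy A = Abs_fps (\<lambda>i. fps_deriv (A $ i))"

lemma T_nth[simp]: "T f $ i $ j = f i j" by (simp add: T_def)
lemma U_T[simp]: "U (T f) = f" by (simp add: U_def)
lemma T_U[simp]: "T (U A) = A" by (simp add: U_def T_def fps_eq_iff)
lemma U_nth: "U A i j = A $ i $ j" by (simp add: U_def)
lemma U_inj: "U A = U B \<longleftrightarrow> A = B" by (metis T_U)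

declare U_nth[simp]

lemma RR_mult_nth: "(A * B :: R) $ i $ j = (\<Sum>i1\<le>i. \<Sum>j1\<le>j. A $ i1 $ j1 * B $ (i - i1) $ (j - j1))"
  by (simp add: fps_mult_nth fps_sum_nth atLeast0AtMost)

lemma U_mult: "ps_mult (U A) (U B) = U (A * B)"
  by (simp add: ps_mult_def RR_mult_nth fun_eq_iff)
lemma U_add: "ps_add (U A) (U B) = U (A + B)"
  by (simp add: ps_add_def fun_eq_iff)
lemma U_sub: "ps_sub (U A) (U B) = U (A - B)"
  by (simp add: ps_sub_def fun_eq_iff)
lemma Cst_nth[simp]: "Cst c $ i $ j = (if i = 0 \<and> j = 0 then c else 0)"
  by (simp add: Cst_def)
lemma U_const: "ps_const c = U (Cst c)"
  by (simp add: ps_const_def fun_eq_iff)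
lemma U_X: "ps_X = U fps_X"
  by (auto simp add: ps_X_def fun_eq_iff fps_X_def)
lemma Yv_nth[simp]: "Yv $ i $ j = (if i = 0 \<and> j = 1 then 1 else 0)"
  by (simp add: Yv_def fps_X_def)
lemma U_Y: "ps_Y = U Yv"
  by (auto simp add: ps_Y_def fun_eq_iff)
lemma U_dx: "ps_dx (U A) = U (fps_deriv A)"
  by (simp add: ps_dx_def fun_eq_iff fps_of_nat[symmetric])
lemma Dy_nth[simp]: "Dy A $ i $ j = of_nat (Suc j) * A $ i $ Suc j"
  by (simp add: Dy_def)
lemma U_dy: "ps_dy (U A) = U (Dy A)"
  by (simp add: ps_dy_def fun_eq_iff)
lemma U_divX: "ps_divX (U A) = U (fps_shift 1 A)"
  by (simp add: ps_divX_def fun_eq_iff)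

definition V :: "R \<Rightarrow> R \<Rightarrow> R \<Rightarrow> R" where "V a b g = a * fps_deriv g + b * Dy g"

lemma U_vf: "vf_apply (U a) (U b) (U g) = U (V a b g)"
  by (simp add: vf_apply_def V_def U_dx U_dy U_mult U_add)

lemma U_vf_pow: "(vf_apply (U a) (U b) ^^ n) (U g) = U ((V a b ^^ n) g)"
  by (induct n) (simp_all add: U_vf del: U_nth)

lemma Dy_add[simp]: "Dy (A + B) = Dy A + Dy B"
  by (simp add: fps_eq_iff algebra_simps)
lemma Dy_sub[simp]: "Dy (A - B) = Dy A - Dy B"
  by (simp add: fps_eq_iff algebra_simps)
lemma Dy_mult[simp]: "Dy (A * B) = A * Dy B + Dy A * B"
  by (simp add: Dy_def fps_eq_iff fps_mult_nth fps_deriv_sum sum.distrib[symmetric] del: fps_deriv_nth)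
lemma Dy_Cst[simp]: "Dy (Cst c) = 0"
  by (simp add: fps_eq_iff)
lemma Dy_const[simp]: "Dy (fps_const c) = fps_const (fps_deriv c)"
  by (simp add: fps_eq_iff)
lemma Dy_zero[simp]: "Dy 0 = 0"
  by (simp add: fps_eq_iff)

lemma Cst_mult_nth[simp]: "(Cst s * F) $ i $ j = s * F $ i $ j"
  by (simp add: Cst_def)
lemma Cst_mult: "Cst (x * y) = Cst x * Cst y" by (simp add: Cst_def)
lemma Cst_add: "Cst (x + y) = Cst x + Cst y" by (simp add: Cst_def)
lemma Cst_of_nat: "Cst (of_nat n) = of_nat n" by (simp add: Cst_def fps_of_nat)
lemma Cst_1: "Cst 1 = 1" by (simp add: Cst_def)
lemma Cst_0: "Cst 0 = 0" by (simp add: Cst_def)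

definition ordR :: "R \<Rightarrow> nat \<Rightarrow> bool" where
  "ordR F m \<longleftrightarrow> (\<forall>i j. i + j < m \<longrightarrow> F $ i $ j = 0)"

lemma ordR_U: "ps_order_ge (U F) m \<longleftrightarrow> ordR F m"
  by (simp add: ps_order_ge_def ordR_def)
lemma ordR_0[simp]: "ordR F 0" by (simp add: ordR_def)
lemma ordR_zero[simp]: "ordR 0 m" by (simp add: ordR_def)
lemma ordR_mono: "ordR F m \<Longrightarrow> n \<le> m \<Longrightarrow> ordR F n" by (simp add: ordR_def)
lemma ordR_add: "ordR F m \<Longrightarrow> ordR G m \<Longrightarrow> ordR (F + G) m" by (simp add: ordR_def)
lemma ordR_diff: "ordR F m \<Longrightarrow> ordR G m \<Longrightarrow> ordR (F - G) m" by (simp add: ordR_def)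
lemma ordR_Cst_mult: "ordR F m \<Longrightarrow> ordR (Cst s * F) m" by (simp add: ordR_def)
lemma ordR_sum: "(\<And>k. k \<in> S \<Longrightarrow> ordR (f k) m) \<Longrightarrow> ordR (sum f S) m"
  by (induct S rule: infinite_finite_induct) (auto intro: ordR_add)
lemma ordR_mult: "ordR F m \<Longrightarrow> ordR G n \<Longrightarrow> ordR (F * G) (m + n)"
  unfolding ordR_def RR_mult_nth
proof (intro allI impI sum.neutral ballI)
  fix i j i1 j1 assume "\<forall>i j. i + j < m \<longrightarrow> F $ i $ j = 0" "\<forall>i j. i + j < n \<longrightarrow> G $ i $ j = 0"
    "i + j < m + n" "i1 \<in> {..i}" "j1 \<in> {..j}"
  then show "F $ i1 $ j1 * G $ (i - i1) $ (j - j1) = 0"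
    by (cases "i1 + j1 < m") auto
qed
lemma ordR_deriv: "ordR F m \<Longrightarrow> ordR (fps_deriv F) (m - 1)"
  by (simp add: ordR_def fps_of_nat[symmetric])
lemma ordR_Dy: "ordR F m \<Longrightarrow> ordR (Dy F) (m - 1)"
  by (simp add: ordR_def)
lemma ordR_V: assumes "ordR a 2" "ordR b 2" "ordR G m" shows "ordR (V a b G) (Suc m)"
proof -
  have "ordR (a * fps_deriv G) (2 + (m - 1))" "ordR (b * Dy G) (2 + (m - 1))"
    using ordR_mult[OF assms(1) ordR_deriv[OF assms(3)]] ordR_mult[OF assms(2) ordR_Dy[OF assms(3)]] by auto
  then show ?thesis unfolding V_def by (auto intro!: ordR_add elim: ordR_mono)
qed
lemma ordR_Vpow: "ordR a 2 \<Longrightarrow> ordR b 2 \<Longrightarrow> ordR ((V a b ^^ n) G) n"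
  by (induct n) (auto intro: ordR_V)

lemma ordR_all_eq: assumes "\<And>N. ordR (F - G) N" shows "F = G"
proof -
  have "F $ i $ j = G $ i $ j" for i j
  proof -
    have "ordR (F - G) (Suc (i + j))" by (rule assms)
    then have "(F - G) $ i $ j = 0" unfolding ordR_def by blast
    then show ?thesis by simp
  qed
  then show ?thesis by (simp add: fps_eq_iff)
qed

lemma ordR_mult_cong: assumes "ordR (F - F') N" "ordR (G - G') N" shows "ordR (F * G - F' * G') N"
proof -
  have "F * G - F' * G' = (F - F') * G + F' * (G - G')" by (simp add: algebra_simps)
  moreover have "ordR ((F - F') * G) N" "ordR (F' * (G - G')) N"
    using ordR_mult[OF assms(1) ordR_0[of G]] ordR_mult[OF ordR_0[of F'] assms(2)] by auto
  ultimately show ?thesis by (auto intro!: ordR_add)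
qed
lemma ordR_trans: "ordR (F - G) N \<Longrightarrow> ordR (G - H) N \<Longrightarrow> ordR (F - H) N"
  using ordR_add[of "F - G" N "G - H"] by simp
lemma ordR_sym: "ordR (F - G) N \<Longrightarrow> ordR (G - F) N"
  by (simp add: ordR_def)

lemma V_add[simp]: "V a b (F + G) = V a b F + V a b G"
  by (simp add: V_def algebra_simps)
lemma V_diff[simp]: "V a b (F - G) = V a b F - V a b G"
  by (simp add: V_def algebra_simps)
lemma V_mult: "V a b (F * G) = F * V a b G + V a b F * G"
  by (simp add: V_def algebra_simps)
lemma V_Cst[simp]: "V a b (Cst s) = 0"
  by (simp add: V_def Cst_def)
lemma V_zero[simp]: "V a b 0 = 0"
  by (simp add: V_def)
lemma V_Cst_mult[simp]: "V a b (Cst s * F) = Cst s * V a b F"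
  by (simp add: V_mult)
lemma V_sum: "V a b (sum f S) = (\<Sum>k\<in>S. V a b (f k))"
  by (induct S rule: infinite_finite_induct) auto
lemma Vpow_Cst_mult: "(V a b ^^ n) (Cst s * F) = Cst s * (V a b ^^ n) F"
  by (induct n) auto
lemma Vpow_add: "(V a b ^^ n) (F + G) = (V a b ^^ n) F + (V a b ^^ n) G"
  by (induct n) auto
lemma Vpow_Cst: "n > 0 \<Longrightarrow> (V a b ^^ n) (Cst s) = 0"
proof (induct n)
  case (Suc n) then show ?case
    by (cases n) auto
qed auto

definition Wd :: "R \<Rightarrow> R \<Rightarrow> nat \<Rightarrow> R \<Rightarrow> R" where
  "Wd a b n G = Cst (inverse (fact n)) * (V a b ^^ n) G"
definition E :: "R \<Rightarrow> R \<Rightarrow> nat \<Rightarrow> R \<Rightarrow> R" where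
  "E a b N G = (\<Sum>n\<le>N. Wd a b n G)"
definition Exp :: "R \<Rightarrow> R \<Rightarrow> R \<Rightarrow> R" where
  "Exp a b G = T (vf_exp (U a) (U b) (U G))"

lemma U_Exp: "vf_exp (U a) (U b) (U G) = U (Exp a b G)"
  by (simp add: Exp_def del: U_nth)

lemma V_Wd: "V a b (Wd a b k F) = Cst (of_nat (Suc k)) * Wd a b (Suc k) F"
proof -
  have "Cst (of_nat (Suc k)) * Cst (inverse (fact (Suc k))) = Cst (inverse (fact k))"
    by (simp add: Cst_mult[symmetric] field_simps del: of_nat_Suc)
  then show ?thesis by (simp add: Wd_def mult.assoc[symmetric])
qed

lemma Wd_Suc: "Wd a b (Suc n) F = Cst (inverse (of_nat (Suc n))) * V a b (Wd a b n F)"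
proof -
  have "Cst (inverse (of_nat (Suc n))) * Cst (of_nat (Suc n)) = 1"
    by (simp add: Cst_mult[symmetric] Cst_1 del: of_nat_Suc)
  then show ?thesis by (simp add: V_Wd mult.assoc[symmetric])
qed

lemma Wd_mult: "Wd a b n (F * G) = (\<Sum>k\<le>n. Wd a b k F * Wd a b (n - k) G)"
proof (induct n)
  case 0 then show ?case by (simp add: Wd_def Cst_1)
next
  case (Suc n)
  let ?W = "Wd a b"
  have "V a b (\<Sum>k\<le>n. ?W k F * ?W (n - k) G) =
     (\<Sum>k\<le>n. Cst (of_nat (Suc n - k)) * (?W k F * ?W (Suc n - k) G)) +
     (\<Sum>k\<le>n. Cst (of_nat (Suc k)) * (?W (Suc k) F * ?W (n - k) G))"
    by (simp add: V_sum V_mult V_Wd sum.distrib Suc_diff_le algebra_simps)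
  also have "(\<Sum>k\<le>n. Cst (of_nat (Suc n - k)) * (?W k F * ?W (Suc n - k) G)) =
      (\<Sum>k\<le>Suc n. Cst (of_nat (Suc n - k)) * (?W k F * ?W (Suc n - k) G))"
    by (simp add: Cst_0)
  also have "(\<Sum>k\<le>n. Cst (of_nat (Suc k)) * (?W (Suc k) F * ?W (n - k) G)) =
      (\<Sum>k\<le>Suc n. Cst (of_nat k) * (?W k F * ?W (Suc n - k) G))"
    by (subst sum.atMost_Suc_shift) (simp add: Cst_0)
  also have "(\<Sum>k\<le>Suc n. Cst (of_nat (Suc n - k)) * (?W k F * ?W (Suc n - k) G)) +
      (\<Sum>k\<le>Suc n. Cst (of_nat k) * (?W k F * ?W (Suc n - k) G)) =
      (\<Sum>k\<le>Suc n. Cst (of_nat (Suc n)) * (?W k F * ?W (Suc n - k) G))"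
  proof -
    have *: "Cst (of_nat (Suc n - k)) * t + Cst (of_nat k) * t = Cst (of_nat (Suc n)) * t"
      if "k \<le> Suc n" for k and t :: R
    proof -
      have "Cst (of_nat (Suc n - k)) * t + Cst (of_nat k) * t = Cst (of_nat (Suc n - k + k)) * t"
        by (simp only: distrib_right[symmetric] Cst_add[symmetric] of_nat_add)
      then show ?thesis using that by simp
    qed
    show ?thesis unfolding sum.distrib[symmetric] by (rule sum.cong) (simp, rule *, simp)
  qed
  finally have "V a b (\<Sum>k\<le>n. ?W k F * ?W (n - k) G) =
      Cst (of_nat (Suc n)) * (\<Sum>k\<le>Suc n. ?W k F * ?W (Suc n - k) G)"
    by (simp only: sum_distrib_left)
  moreover have "Cst (inverse (of_nat (Suc n))) * Cst (of_nat (Suc n)) = 1"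
    by (simp add: Cst_mult[symmetric] Cst_1 del: of_nat_Suc)
  ultimately show ?case
    by (simp add: Wd_Suc Suc.hyps mult.assoc[symmetric] del: of_nat_Suc)
qed

lemma R_sum_nth: "(sum f S :: R) $ i $ j = (\<Sum>k\<in>S. f k $ i $ j)"
  by (simp add: fps_sum_nth)

lemma ordR_Wd: "ordR a 2 \<Longrightarrow> ordR b 2 \<Longrightarrow> ordR (Wd a b n G) n"
  unfolding Wd_def by (intro ordR_Cst_mult ordR_Vpow)

lemma Exp_E:
  assumes a: "ordR a 2" and b: "ordR b 2"
  shows "ordR (Exp a b G - E a b N G) (Suc N)"
  unfolding ordR_def
proof (intro allI impI)
  fix i j assume ij: "i + j < Suc N"
  have "Exp a b G $ i $ j = (\<Sum>k\<le>i + j. ((V a b ^^ k) G) $ i $ j / fact k)"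
    using U_vf_pow[where a=a and b=b and g=G] by (simp add: Exp_def vf_exp_def del: U_nth) (simp add: U_def)
  also have "\<dots> = (\<Sum>k\<le>N. ((V a b ^^ k) G) $ i $ j / fact k)"
  proof (rule sum.mono_neutral_left)
    show "\<forall>k\<in>{..N} - {..i + j}. (V a b ^^ k) G $ i $ j / fact k = 0"
      using ordR_Vpow[OF a b] unfolding ordR_def by auto
  qed (use ij in auto)
  also have "\<dots> = E a b N G $ i $ j"
    by (simp add: E_def Wd_def R_sum_nth divide_inverse mult.commute)
  finally show "(Exp a b G - E a b N G) $ i $ j = 0" by simp
qed

lemma ordR_eq_Exp:
  assumes a: "ordR a 2" and b: "ordR b 2" and H: "\<And>N. ordR (X - E a b N G) (Suc N)"
  shows "Exp a b G = X"
proof (rule ordR_all_eq)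
  fix N
  have "ordR (Exp a b G - X) (Suc N)"
    using ordR_trans[OF Exp_E[OF a b] ordR_sym[OF H]] .
  then show "ordR (Exp a b G - X) N" by (rule ordR_mono) simp
qed

lemma E_mult:
  assumes a: "ordR a 2" and b: "ordR b 2"
  shows "ordR (E a b N F * E a b N G - E a b N (F * G)) (Suc N)"
proof -
  let ?t = "\<lambda>k m. Wd a b k F * Wd a b m G"
  let ?B = "{..N} \<times> {..N}" and ?Tr = "{(k, m). k + m \<le> N}"
  have sub: "?Tr \<subseteq> ?B" by auto
  have "E a b N F * E a b N G = (\<Sum>(k,m)\<in>?B. ?t k m)"
    by (simp add: E_def sum_product sum.cartesian_product)
  also have "\<dots> = (\<Sum>(k,m)\<in>?B - ?Tr. ?t k m) + (\<Sum>(k,m)\<in>?Tr. ?t k m)"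
    by (rule sum.subset_diff[OF sub]) auto
  also have "(\<Sum>(k,m)\<in>?Tr. ?t k m) = E a b N (F * G)"
    by (simp add: E_def Wd_mult sum.triangle_reindex_eq)
  finally have eq: "E a b N F * E a b N G - E a b N (F * G) = (\<Sum>(k,m)\<in>?B - ?Tr. ?t k m)"
    by simp
  show ?thesis unfolding eq
  proof (rule ordR_sum)
    fix x assume "x \<in> ?B - ?Tr"
    then obtain k m where x: "x = (k, m)" "Suc N \<le> k + m" by auto
    have "ordR (?t k m) (k + m)" by (intro ordR_mult ordR_Wd a b)
    then show "ordR (case x of (k, m) \<Rightarrow> ?t k m) (Suc N)"
      using x by (auto elim: ordR_mono)
  qed
qed

lemma Exp_mult:
  assumes a: "ordR a 2" and b: "ordR b 2"
  shows "Exp a b (F * G) = Exp a b F * Exp a b G"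
proof (rule ordR_eq_Exp[OF a b])
  fix N
  have "ordR (Exp a b F * Exp a b G - E a b N F * E a b N G) (Suc N)"
    by (intro ordR_mult_cong Exp_E a b)
  then show "ordR (Exp a b F * Exp a b G - E a b N (F * G)) (Suc N)"
    using E_mult[OF a b] ordR_trans by blast
qed

lemma E_add: "E a b N (F + G) = E a b N F + E a b N G"
  by (simp add: E_def Wd_def Vpow_add distrib_left sum.distrib)

lemma Exp_add:
  assumes a: "ordR a 2" and b: "ordR b 2"
  shows "Exp a b (F + G) = Exp a b F + Exp a b G"
proof (rule ordR_eq_Exp[OF a b])
  fix N
  have "ordR (Exp a b F + Exp a b G - (E a b N F + E a b N G)) (Suc N)"
    using ordR_add[OF Exp_E[OF a b, of F N] Exp_E[OF a b, of G N]] by (simp add: algebra_simps)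
  then show "ordR (Exp a b F + Exp a b G - E a b N (F + G)) (Suc N)" by (simp add: E_add)
qed

lemma E_Cst: "E a b N (Cst s) = Cst s"
proof -
  have "E a b N (Cst s) = (\<Sum>n\<in>{0}. Wd a b n (Cst s))"
    unfolding E_def by (rule sum.mono_neutral_right) (auto simp: Wd_def Vpow_Cst)
  then show ?thesis by (simp add: Wd_def Cst_1)
qed

lemma Exp_Cst:
  assumes a: "ordR a 2" and b: "ordR b 2"
  shows "Exp a b (Cst s) = Cst s"
  by (rule ordR_eq_Exp[OF a b]) (simp add: E_Cst)

definition Lc :: "complex \<Rightarrow> complex fps" where "Lc c = fps_const c + fps_X"
definition Pc :: "complex \<Rightarrow> R \<Rightarrow> R" where
  "Pc c G = Abs_fps (\<lambda>k. \<Sum>n\<le>k. fps_const (G $ (k - n) $ n) * Lc c ^ n)"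

lemma Pc_nth: "Pc c G $ k = (\<Sum>n\<le>k. fps_const (G $ (k - n) $ n) * Lc c ^ n)"
  by (simp add: Pc_def)

lemma Lpow_nth: "(Lc c ^ n) $ l = of_nat (n choose l) * c ^ (n - l)"
proof -
  have "Lc c ^ n = (\<Sum>k\<le>n. of_nat (n choose k) * fps_X ^ k * fps_const c ^ (n - k))"
    unfolding Lc_def by (subst add.commute) (rule binomial_ring)
  also have "\<dots> $ l = (\<Sum>k\<le>n. if k = l then of_nat (n choose k) * c ^ (n - k) else 0)"
    unfolding fps_sum_nth
    by (intro sum.cong refl)
       (simp add: fps_of_nat[symmetric] fps_const_power mult.assoc fps_X_power_mult_nth)
  also have "\<dots> = of_nat (n choose l) * c ^ (n - l)"
    by (simp add: sum.delta)
  finally show ?thesis .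
qed

lemma U_Pc: "pull1 c (U G) = U (Pc c G)"
  by (simp add: pull1_def fun_eq_iff Pc_nth fps_sum_nth Lpow_nth mult.assoc)

lemma Pc_add: "Pc c (F + G) = Pc c F + Pc c G"
  by (rule fps_ext) (simp add: Pc_nth sum.distrib distrib_right fps_const_add[symmetric] del: fps_const_add)
lemma Pc_diff: "Pc c (F - G) = Pc c F - Pc c G"
  by (simp add: fps_eq_iff Pc_nth sum_subtractf left_diff_distrib fps_const_sub[symmetric] del: fps_const_sub)

lemma Pc_Cst: "Pc c (Cst s) = Cst s"
proof (rule fps_ext)
  fix k
  have "(\<Sum>n\<le>k. fps_const (Cst s $ (k - n) $ n) * Lc c ^ n) = (\<Sum>n\<in>{0}. fps_const (Cst s $ (k - n) $ n) * Lc c ^ n)"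
    by (rule sum.mono_neutral_right) auto
  then show "Pc c (Cst s) $ k = Cst s $ k"
    by (simp add: Pc_nth Cst_def)
qed

lemma Pc_X: "Pc c fps_X = fps_X"
proof (rule fps_ext)
  fix k
  have "(\<Sum>n\<le>k. fps_const ((fps_X::R) $ (k - n) $ n) * Lc c ^ n) = (\<Sum>n\<in>{0}. fps_const ((fps_X::R) $ (k - n) $ n) * Lc c ^ n)"
    by (rule sum.mono_neutral_right) (auto simp: fps_X_def)
  then show "Pc c fps_X $ k = fps_X $ k"
    by (simp add: Pc_nth fps_X_def)
qed

lemma Pc_Y: "Pc c Yv = fps_X * fps_const (Lc c)"
proof (rule fps_ext)
  fix k
  show "Pc c Yv $ k = (fps_X * fps_const (Lc c)) $ k"
  proof (cases "k = 1")
    case True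
    then show ?thesis by (simp add: Pc_nth)
  next
    case False
    then have "(\<Sum>n\<le>k. fps_const (Yv $ (k - n) $ n) * Lc c ^ n) = 0"
      by (intro sum.neutral) auto
    then show ?thesis using False by (simp add: Pc_nth)
  qed
qed

lemma Pc_nth0: "G $ 0 $ 0 = 0 \<Longrightarrow> Pc c G $ 0 = 0"
  by (simp add: Pc_nth)

lemma ordR_Pc: "ordR G m \<Longrightarrow> ordR (Pc c G) m"
  unfolding ordR_def Pc_nth fps_sum_nth
  by (auto intro!: sum.neutral)

lemma Pc_Dy: "Dy (Pc c G) = fps_X * Pc c (Dy G)"
proof (rule fps_ext)
  fix k
  have d: "fps_deriv (Lc c) = 1" by (simp add: Lc_def)
  have lhs: "Dy (Pc c G) $ k = (\<Sum>n\<le>k. fps_const (G $ (k - n) $ n) * (of_nat n * Lc c ^ (n - 1)))"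
    by (simp add: Dy_def Pc_nth fps_deriv_sum fps_deriv_power' d)
  show "Dy (Pc c G) $ k = (fps_X * Pc c (Dy G)) $ k"
  proof (cases k)
    case 0 then show ?thesis using lhs by simp
  next
    case (Suc k')
    have "Dy (Pc c G) $ k = (\<Sum>n\<le>k'. fps_const (G $ (k' - n) $ Suc n) * (of_nat (Suc n) * Lc c ^ n))"
      unfolding Suc lhs[unfolded Suc] by (subst sum.atMost_Suc_shift) simp
    also have "\<dots> = (fps_X * Pc c (Dy G)) $ k"
      by (simp add: Suc Pc_nth fps_of_nat[symmetric] fps_const_mult[symmetric] mult_ac del: of_nat_Suc fps_const_mult)
    finally show ?thesis .
  qed
qed

lemma deriv_R_nth: "(fps_deriv G :: R) $ i $ j = of_nat (Suc i) * G $ Suc i $ j"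
  by (simp add: fps_of_nat[symmetric])

lemma Pc_deriv: "fps_deriv (Pc c G) = Pc c (fps_deriv G) + fps_const (Lc c) * Pc c (Dy G)"
proof (rule fps_ext)
  fix k
  let ?g = "\<lambda>n. G $ (Suc k - n) $ n"
  have A: "Pc c (fps_deriv G) $ k = (\<Sum>n\<le>Suc k. fps_const (of_nat (Suc k - n) * ?g n) * Lc c ^ n)"
  proof -
    have "Pc c (fps_deriv G) $ k = (\<Sum>n\<le>k. fps_const (of_nat (Suc k - n) * ?g n) * Lc c ^ n)"
      unfolding Pc_nth deriv_R_nth by (intro sum.cong refl) (simp add: Suc_diff_le)
    then show ?thesis by simp
  qed
  have B: "(fps_const (Lc c) * Pc c (Dy G)) $ k = (\<Sum>n\<le>Suc k. fps_const (of_nat n * ?g n) * Lc c ^ n)"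
  proof -
    have "(fps_const (Lc c) * Pc c (Dy G)) $ k = (\<Sum>n\<le>k. fps_const (of_nat (Suc n) * ?g (Suc n)) * Lc c ^ Suc n)"
      unfolding fps_mult_left_const_nth Pc_nth sum_distrib_left
      by (intro sum.cong refl) (simp add: mult_ac)
    then show ?thesis by (subst sum.atMost_Suc_shift) simp
  qed
  have "Pc c (fps_deriv G) $ k + (fps_const (Lc c) * Pc c (Dy G)) $ k =
    (\<Sum>n\<le>Suc k. fps_const (of_nat (Suc k) * ?g n) * Lc c ^ n)"
    unfolding A B sum.distrib[symmetric]
  proof (intro sum.cong refl)
    fix n assume "n \<in> {..Suc k}"
    then have "of_nat (Suc k - n) + of_nat n = (of_nat (Suc k) :: complex)"
      by (simp add: of_nat_diff)
    then show "fps_const (of_nat (Suc k - n) * ?g n) * Lc c ^ n + fps_const (of_nat n * ?g n) * Lc c ^ n =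
       fps_const (of_nat (Suc k) * ?g n) * Lc c ^ n"
      by (simp add: distrib_right[symmetric] fps_const_add[symmetric] del: fps_const_add of_nat_Suc)
  qed
  moreover have "fps_deriv (Pc c G) $ k = (\<Sum>n\<le>Suc k. fps_const (of_nat (Suc k) * ?g n) * Lc c ^ n)"
    unfolding fps_deriv_nth Pc_nth fps_of_nat[symmetric] sum_distrib_left Suc_eq_plus1[symmetric]
    by (intro sum.cong refl) (simp add: fps_const_mult[symmetric] mult_ac del: fps_const_mult of_nat_Suc)
  ultimately show "fps_deriv (Pc c G) $ k = (Pc c (fps_deriv G) + fps_const (Lc c) * Pc c (Dy G)) $ k"
    by simp
qed

lemma fps_const_sum: "fps_const (sum f S) = (\<Sum>x\<in>S. fps_const (f x))"
  by (induct S rule: infinite_finite_induct) (auto simp: fps_const_add[symmetric] simp del: fps_const_add)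

lemma sum3_Sigma:
  fixes f :: "nat \<Rightarrow> nat \<Rightarrow> nat \<Rightarrow> 'a::comm_monoid_add"
  assumes "finite A" "\<And>n. finite (B n)" "\<And>n. finite (C n)"
  shows "(\<Sum>n\<in>A. \<Sum>i\<in>B n. \<Sum>j\<in>C n. f n i j) = (\<Sum>(n,i,j)\<in>(SIGMA n:A. B n \<times> C n). f n i j)"
  using assms by (simp add: sum.cartesian_product sum.Sigma)

lemma Pc_mult: "Pc c (F * G) = Pc c F * Pc c G"
proof (rule fps_ext)
  fix k :: nat
  let ?L = "Lc c"
  let ?S1 = "SIGMA n:{..k}. {..k-n} \<times> {..n}"
  let ?S2 = "SIGMA d:{..k}. {..d} \<times> {..k-d}"
  have L1: "Pc c (F * G) $ k = (\<Sum>(n,i,j)\<in>?S1. fps_const (F$i$j * G$(k-n-i)$(n-j)) * ?L ^ n)"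
    by (simp add: Pc_nth RR_mult_nth fps_const_sum sum_distrib_right sum3_Sigma)
  have L2: "(Pc c F * Pc c G) $ k = (\<Sum>(d,n1,n2)\<in>?S2. fps_const (F$(d-n1)$n1 * G$(k-d-n2)$n2) * ?L ^ (n1 + n2))"
    by (simp add: fps_mult_nth atLeast0AtMost Pc_nth sum_product sum3_Sigma power_add mult_ac)
  have "(\<Sum>(n,i,j)\<in>?S1. fps_const (F$i$j * G$(k-n-i)$(n-j)) * ?L ^ n) =
        (\<Sum>(d,n1,n2)\<in>?S2. fps_const (F$(d-n1)$n1 * G$(k-d-n2)$n2) * ?L ^ (n1 + n2))"
    by (rule sum.reindex_bij_witness[where i="\<lambda>(d,n1,n2). (n1+n2, d-n1, n1)" and j="\<lambda>(n,i,j). (i+j, j, n-j)"])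
       (auto simp: diff_diff_add add.commute)
  then show "Pc c (F * G) $ k = (Pc c F * Pc c G) $ k" using L1 L2 by simp
qed

lemma Pc_zero: "Pc c 0 = 0"
  using Pc_Cst[of c 0] by (simp add: Cst_0)
lemma Pc_sum: "Pc c (sum f S) = (\<Sum>x\<in>S. Pc c (f x))"
  by (induct S rule: infinite_finite_induct) (auto simp: Pc_zero Pc_add)
lemma Pc_Cst_mult: "Pc c (Cst s * F) = Cst s * Pc c F"
  by (simp add: Pc_mult Pc_Cst)

lemma shift_X: fixes H :: R assumes "H $ 0 = 0" shows "fps_X * fps_shift 1 H = H"
proof (rule fps_ext)
  fix n show "(fps_X * fps_shift 1 H) $ n = H $ n" using assms by (cases n) auto
qed

definition Bt :: "complex \<Rightarrow> R \<Rightarrow> R \<Rightarrow> R" where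
  "Bt c a b = fps_shift 1 (Pc c b - fps_const (Lc c) * Pc c a)"

lemma Pc_V:
  assumes H0: "(Pc c b - fps_const (Lc c) * Pc c a) $ 0 = 0"
  shows "V (Pc c a) (Bt c a b) (Pc c G) = Pc c (V a b G)"
proof -
  let ?H = "Pc c b - fps_const (Lc c) * Pc c a"
  have X: "fps_X * Bt c a b = ?H" using shift_X[OF H0] unfolding Bt_def .
  have "V (Pc c a) (Bt c a b) (Pc c G) =
     Pc c a * Pc c (fps_deriv G) + (fps_const (Lc c) * Pc c a + fps_X * Bt c a b) * Pc c (Dy G)"
    by (simp add: V_def Pc_deriv Pc_Dy algebra_simps)
  also have "\<dots> = Pc c (V a b G)"
    unfolding X by (simp add: V_def Pc_add Pc_mult)
  finally show ?thesis .
qed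

lemma Pc_Vpow:
  assumes H0: "(Pc c b - fps_const (Lc c) * Pc c a) $ 0 = 0"
  shows "(V (Pc c a) (Bt c a b) ^^ n) (Pc c G) = Pc c ((V a b ^^ n) G)"
  by (induct n) (simp_all add: Pc_V[OF H0])

lemma Pc_E:
  assumes H0: "(Pc c b - fps_const (Lc c) * Pc c a) $ 0 = 0"
  shows "E (Pc c a) (Bt c a b) N (Pc c G) = Pc c (E a b N G)"
  by (simp add: E_def Wd_def Pc_sum Pc_Cst_mult Pc_Vpow[OF H0])

lemma Exp_Pc:
  assumes a: "ordR a 2" and b: "ordR b 2"
    and H0: "(Pc c b - fps_const (Lc c) * Pc c a) $ 0 = 0"
    and a': "ordR (Pc c a) 2" and b': "ordR (Bt c a b) 2"
  shows "Exp (Pc c a) (Bt c a b) (Pc c G) = Pc c (Exp a b G)"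
proof (rule ordR_eq_Exp[OF a' b'])
  fix N
  show "ordR (Pc c (Exp a b G) - E (Pc c a) (Bt c a b) N (Pc c G)) (Suc N)"
    unfolding Pc_E[OF H0] Pc_diff[symmetric] by (intro ordR_Pc Exp_E a b)
qed

lemma sum_atMost_2: "(\<Sum>i\<le>(2::nat). f i) = f 0 + f 1 + (f 2 :: 'a::comm_monoid_add)"
  by (simp add: numeral_2_eq_2 add_ac)

lemma Pc_1: "ordR G 2 \<Longrightarrow> Pc c G $ 1 = 0"
  unfolding ordR_def by (simp add: Pc_nth)

lemma Pc_20: "Pc c G $ 2 $ 0 = G$2$0 + G$1$1 * c + G$0$2 * c^2"
proof -
  have "Lc c $ 0 = c" by (simp add: Lc_def)
  then show ?thesis by (simp add: Pc_nth fps_sum_nth sum_atMost_2 Lpow_nth del: power2_eq_square)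
qed

lemma Lc_const: "fps_const (Lc c) = Cst c + Yv"
  by (simp add: Lc_def Cst_def Yv_def)

lemma Dy_X: "Dy (fps_X :: R) = 0"
  by (rule fps_ext) (simp add: Dy_def fps_X_def)
lemma V_X: "V a b fps_X = a"
  by (simp add: V_def Dy_X)
lemma V_Y: "V a b Yv = b"
  by (simp add: V_def Yv_def fps_eq_iff)

lemma E2_approx:
  assumes a: "ordR a 2" and b: "ordR b 2" and v: "V a b G = h" and h: "ordR h 2"
  shows "ordR (Exp a b G - (G + h)) 3"
proof -
  have "E a b 2 G = G + h + Wd a b 2 G"
    by (simp add: E_def sum_atMost_2 Wd_def Cst_1 v)
  moreover have "ordR (Wd a b 2 G) 3"
    unfolding Wd_def by (intro ordR_Cst_mult) (simp add: numeral_2_eq_2 v ordR_V[OF a b h, simplified])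
  ultimately show ?thesis
    using ordR_add[OF Exp_E[OF a b, of G 2] ordR_mono[OF _ order_refl]] 
    by (metis (no_types, lifting) ordR_add add_diff_cancel_left' diff_add_eq numeral_3_eq_3 numeral_2_eq_2
        Exp_E[OF a b, of G 2])
qed

lemma deg2_eq:
  assumes "ordR (F - (G + h)) 3" "ordR G 3" "i + j = 2"
  shows "F $ i $ j = h $ i $ j"
proof -
  have "i + j < 3" using assms(3) by simp
  then have "(F - (G + h)) $ i $ j = 0" "G $ i $ j = 0" using assms(1,2) unfolding ordR_def by blast+
  then show ?thesis by simp
qed

lemma chart1_R:
  fixes a b P Q :: R
  assumes a: "ordR a 2" and b: "ordR b 2" and P: "ordR P 2" and Q: "ordR Q 2"
    and eX: "Exp a b fps_X = fps_X + P" and eY: "Exp a b Yv = Yv + Q"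
    and H2: "b$2$0 + b$1$1 * c + b$0$2 * c^2 = c * (a$2$0 + a$1$1 * c + a$0$2 * c^2)"
  shows "ordR (Pc c a) 2" "ordR (Bt c a b) 2"
    "Exp (Pc c a) (Bt c a b) fps_X = fps_X + Pc c P"
    "fps_shift 1 (Pc c (fps_X + P)) * (Exp (Pc c a) (Bt c a b) Yv + Cst c) = fps_shift 1 (Pc c (Yv + Q))"
    "fps_shift 1 (Pc c (fps_X + P)) $ 0 $ 0 = 1"
proof -
  let ?H = "Pc c b - fps_const (Lc c) * Pc c a"
  have a00: "a$0$0 = 0" and b00: "b$0$0 = 0" using a b by (auto simp: ordR_def)
  have H0: "?H $ 0 = 0" by (simp add: Pc_nth0 a00 b00)
  show a': "ordR (Pc c a) 2" by (rule ordR_Pc[OF a])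
  have H1: "?H $ 1 = 0" using Pc_1[OF a] Pc_1[OF b] by simp
  have H20: "?H $ 2 $ 0 = 0"
  proof -
    have L0: "Lc c $ 0 = c" by (simp add: Lc_def)
    have "(fps_const (Lc c) * Pc c a) $ 2 $ 0 = c * Pc c a $ 2 $ 0"
      by (simp add: L0)
    then show ?thesis using H2 by (simp add: Pc_20 L0)
  qed
  show b': "ordR (Bt c a b) 2"
    unfolding ordR_def Bt_def
  proof (intro allI impI)
    fix i j :: nat assume "i + j < 2"
    then have "(i = 0) \<or> (i = 1 \<and> j = 0)" by auto
    then show "fps_shift 1 ?H $ i $ j = 0"
    proof
      assume "i = 0" then show ?thesis using H1 by simp
    next
      assume "i = 1 \<and> j = 0"
      then have "fps_shift 1 ?H $ i $ j = ?H $ 2 $ 0" by (simp add: numeral_2_eq_2)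
      then show ?thesis using H20 by simp
    qed
  qed
  note EP = Exp_Pc[OF a b H0 a', folded Bt_def, OF b']
  have EX: "Exp (Pc c a) (Bt c a b) fps_X = fps_X + Pc c P"
    using EP[of fps_X] by (simp add: Pc_X eX Pc_add)
  then show "Exp (Pc c a) (Bt c a b) fps_X = fps_X + Pc c P" .
  let ?Ex = "Exp (Pc c a) (Bt c a b)"
  have "?Ex (Pc c Yv) = Pc c (Yv + Q)" using EP[of Yv] by (simp add: eY)
  moreover have "?Ex (Pc c Yv) = ?Ex fps_X * (Cst c + ?Ex Yv)"
    by (simp add: Pc_Y Lc_const Exp_mult[OF a' b'] Exp_add[OF a' b'] Exp_Cst[OF a' b'])
  ultimately have eq: "(fps_X + Pc c P) * (?Ex Yv + Cst c) = Pc c (Yv + Q)"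
    using EX by (simp add: add.commute)
  have P00: "P$0$0 = 0" and Q00: "Q$0$0 = 0" using P Q by (auto simp: ordR_def)
  have D: "fps_X * fps_shift 1 (Pc c (fps_X + P)) = fps_X + Pc c P"
    by (subst shift_X) (simp_all add: Pc_nth0 P00 Pc_add Pc_X)
  have N: "fps_X * fps_shift 1 (Pc c (Yv + Q)) = Pc c (Yv + Q)"
    by (rule shift_X) (simp add: Pc_nth0 Q00)
  have "fps_X * (fps_shift 1 (Pc c (fps_X + P)) * (?Ex Yv + Cst c)) = fps_X * fps_shift 1 (Pc c (Yv + Q))"
    unfolding mult.assoc[symmetric] D N eq ..
  then show "fps_shift 1 (Pc c (fps_X + P)) * (?Ex Yv + Cst c) = fps_shift 1 (Pc c (Yv + Q))"
    by simp
  have P1: "P$1$0 = 0" "P$0$1 = 0" using P by (auto simp: ordR_def)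
  show "fps_shift 1 (Pc c (fps_X + P)) $ 0 $ 0 = 1"
    using P1 by (simp add: Pc_nth fps_sum_nth Lpow_nth fps_X_def)
qed

lemma ps_div_U:
  assumes "D * Z = N" "D $ 0 $ 0 \<noteq> 0"
  shows "ps_div (U N) (U D) = U Z"
  unfolding ps_div_def
proof (rule the_equality)
  show "ps_mult (U D) (U Z) = U N" by (simp add: U_mult assms(1) del: U_nth)
next
  fix h assume h: "ps_mult (U D) h = U N"
  have "ps_mult (U D) (U (T h)) = U (D * T h)" by (rule U_mult)
  then have "U (D * T h) = U N" using h by (simp only: U_T)
  then have "D * T h = D * Z" using assms(1) by (simp only: U_inj)
  moreover have "D \<noteq> 0" using assms(2) by auto
  ultimately have "T h = Z" by simp
  then show "h = U Z" by (metis U_T)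
qed

lemma ordR3_eq:
  assumes "ordR (F - G) 3" "i + j = 2"
  shows "F $ i $ j = G $ i $ j"
proof -
  have "i + j < 3" using assms(2) by simp
  then have "(F - G) $ i $ j = 0" using assms(1) unfolding ordR_def by blast
  then show ?thesis by simp
qed

lemma homog_eval_2: "homog_eval f 2 1 c = f 2 0 + f 1 1 * c + f 0 2 * c^2"
  by (simp add: homog_eval_def sum_atMost_2 numeral_2_eq_2)

lemma homog_zero_2: "homog_zero f 2 \<Longrightarrow> f 2 0 = 0 \<and> f 1 1 = 0 \<and> f 0 2 = 0"
proof -
  assume "homog_zero f 2"
  then have h: "\<forall>i\<le>2. f i (2-i) = 0" unfolding homog_zero_def by blast
  have "f 0 (2-0) = 0" "f 1 (2-1) = 0" "f 2 (2-2) = 0"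
    using h[rule_format, of 0] h[rule_format, of 1] h[rule_format, of 2] by simp_all
  then show ?thesis by (simp add: numeral_2_eq_2)
qed

lemma char_H2:
  assumes p: "ps_order_ge p 2" and q: "ps_order_ge q 2" and ch: "char_direction p q 1 c"
  shows "q 2 0 + q 1 1 * c + q 0 2 * c^2 = c * (p 2 0 + p 1 1 * c + p 0 2 * c^2)"
proof -
  obtain k lam where nz: "\<not> (homog_zero p k \<and> homog_zero q k)"
    and low: "\<forall>m<k. homog_zero p m \<and> homog_zero q m"
    and ev: "homog_eval p k 1 c = lam * 1" "homog_eval q k 1 c = lam * c"
    using ch unfolding char_direction_def by blast
  have "\<not> k < 2"
  proof
    assume "k < 2"
    then have "homog_zero p k \<and> homog_zero q k"
      using p q unfolding homog_zero_def ps_order_ge_def by auto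
    then show False using nz by blast
  qed
  then consider "k = 2" | "2 < k" by linarith
  then show ?thesis
  proof cases
    case 1
    then show ?thesis using ev by (simp add: homog_eval_2)
  next
    case 2
    then have "homog_zero p 2" "homog_zero q 2" using low by auto
    then show ?thesis using homog_zero_2[of p] homog_zero_2[of q] by simp
  qed
qed

lemma chart1:
  fixes p q a b :: ps2
  assumes p: "ps_order_ge p 2" and q: "ps_order_ge q 2"
    and a: "ps_order_ge a 2" and b: "ps_order_ge b 2"
    and ex: "vf_exp a b ps_X = ps_add ps_X p" and ey: "vf_exp a b ps_Y = ps_add ps_Y q"
    and ch: "char_direction p q 1 c"
  shows "vf_exp (fst (lift1_X c a b)) (snd (lift1_X c a b)) ps_X = fst (lift1_F c p q) \<and>
         vf_exp (fst (lift1_X c a b)) (snd (lift1_X c a b)) ps_Y = snd (lift1_F c p q)"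
proof -
  define A B P Q where "A = T a" "B = T b" "P = T p" "Q = T q"
  then have abpq: "a = U A" "b = U B" "p = U P" "q = U Q" by simp_all
  have oA: "ordR A 2" and oB: "ordR B 2" and oP: "ordR P 2" and oQ: "ordR Q 2"
    using a b p q by (simp_all add: abpq ordR_U del: U_nth)
  have eX: "Exp A B fps_X = fps_X + P"
    using ex by (simp add: abpq U_X U_Exp U_add U_inj del: U_nth)
  have eY: "Exp A B Yv = Yv + Q"
    using ey by (simp add: abpq U_Y U_Exp U_add U_inj del: U_nth)
  have ax: "ordR (Exp A B fps_X - (fps_X + A)) 3"
    by (rule E2_approx[OF oA oB V_X oA])
  have ay: "ordR (Exp A B Yv - (Yv + B)) 3"
    by (rule E2_approx[OF oA oB V_Y oB])
  have PA: "P $ i $ j = A $ i $ j" if "i + j = 2" for i j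
    using ordR3_eq[OF ax that] by (simp add: eX)
  have QB: "Q $ i $ j = B $ i $ j" if "i + j = 2" for i j
    using ordR3_eq[OF ay that] by (simp add: eY)
  have H2: "B$2$0 + B$1$1 * c + B$0$2 * c^2 = c * (A$2$0 + A$1$1 * c + A$0$2 * c^2)"
    using char_H2[OF p q ch] PA[of 2 0] PA[of 1 1] PA[of 0 2] QB[of 2 0] QB[of 1 1] QB[of 0 2]
    by (simp add: abpq)
  note R = chart1_R[OF oA oB oP oQ eX eY H2]
  have LX: "lift1_X c a b = (U (Pc c A), U (Bt c A B))"
    by (simp add: lift1_X_def abpq U_Pc U_const U_Y U_add U_mult U_sub U_divX Lc_const[symmetric] Bt_def
        del: U_nth)
  have LF1: "fst (lift1_F c p q) = U (fps_X + Pc c P)"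
    by (simp add: lift1_F_def abpq U_Pc U_X U_add del: U_nth)
  have LF2: "snd (lift1_F c p q) = U (Exp (Pc c A) (Bt c A B) Yv)"
  proof -
    have "snd (lift1_F c p q) = ps_sub (ps_div (U (fps_shift 1 (Pc c (Yv + Q)))) (U (fps_shift 1 (Pc c (fps_X + P))))) (U (Cst c))"
      by (simp add: lift1_F_def abpq U_Pc U_X U_Y U_add U_divX U_const del: U_nth)
    also have "\<dots> = U (Exp (Pc c A) (Bt c A B) Yv + Cst c - Cst c)"
      by (subst ps_div_U[OF R(4)]) (use R(5) in \<open>simp_all add: U_sub del: U_nth\<close>)
    finally show ?thesis by simp
  qed
  show ?thesis
    by (simp add: LX LF1 LF2 U_X U_Y U_Exp R(3) del: U_nth)
qed

definition sw :: "ps2 \<Rightarrow> ps2" where "sw f = (\<lambda>i j. f j i)"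

lemma sw_mult: "sw (ps_mult f g) = ps_mult (sw f) (sw g)"
  unfolding sw_def ps_mult_def fun_eq_iff by (auto intro: sum.swap)
lemma sw_add: "sw (ps_add f g) = ps_add (sw f) (sw g)"
  by (simp add: sw_def ps_add_def)
lemma sw_dx: "ps_dx (sw g) = sw (ps_dy g)"
  by (simp add: sw_def ps_dx_def ps_dy_def)
lemma sw_dy: "ps_dy (sw g) = sw (ps_dx g)"
  by (simp add: sw_def ps_dx_def ps_dy_def)
lemma ps_add_comm: "ps_add f g = ps_add g f"
  by (simp add: ps_add_def add.commute)
lemma sw_vf: "vf_apply (sw b) (sw a) (sw g) = sw (vf_apply a b g)"
  by (simp add: vf_apply_def sw_dx sw_dy sw_mult sw_add ps_add_comm)
lemma sw_vf_pow: "(vf_apply (sw b) (sw a) ^^ n) (sw g) = sw ((vf_apply a b ^^ n) g)"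
  by (induct n) (simp_all add: sw_vf)
lemma sw_vf_exp: "vf_exp (sw b) (sw a) (sw g) = sw (vf_exp a b g)"
proof -
  have *: "(vf_apply (sw b) (sw a) ^^ k) (sw g) i j = (vf_apply a b ^^ k) g j i" for k i j
    by (simp add: sw_vf_pow) (simp add: sw_def)
  show ?thesis unfolding fun_eq_iff
  proof (intro allI)
    fix i j show "vf_exp (sw b) (sw a) (sw g) i j = sw (vf_exp a b g) i j"
      unfolding vf_exp_def * by (simp add: sw_def add.commute)
  qed
qed
lemma sw_X: "sw ps_X = ps_Y" by (auto simp: sw_def ps_X_def ps_Y_def fun_eq_iff)
lemma sw_Y: "sw ps_Y = ps_X" by (auto simp: sw_def ps_X_def ps_Y_def fun_eq_iff)
lemma sw_order: "ps_order_ge (sw f) m = ps_order_ge f m"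
  by (auto simp: sw_def ps_order_ge_def add.commute)

lemma pull2_sw: "pull2 f = pull1 0 (sw f)"
proof -
  have *: "(\<Sum>n\<le>k. f n (k - n) * of_nat (n choose l) * (0::complex) ^ (n - l)) =
        (if l \<le> k then f l (k - l) else 0)" for k l
  proof -
    have "(\<Sum>n\<le>k. f n (k - n) * of_nat (n choose l) * (0::complex) ^ (n - l)) =
        (\<Sum>n\<le>k. if n = l then f l (k - l) else 0)"
      by (intro sum.cong refl) auto
    then show ?thesis by simp
  qed
  show ?thesis
    unfolding pull2_def pull1_def sw_def fun_eq_iff by (simp only: *) simp
qed

lemma lift2_X_sw: "lift2_X a b = lift1_X 0 (sw b) (sw a)"
proof -
  have "ps_add (ps_const 0) ps_Y = ps_Y" by (simp add: ps_add_def ps_const_def fun_eq_iff)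
  then show ?thesis by (simp add: lift2_X_def lift1_X_def pull2_sw)
qed

lemma lift2_F_sw: "lift2_F p q = lift1_F 0 (sw q) (sw p)"
proof -
  have "ps_sub h (ps_const 0) = h" for h by (simp add: ps_sub_def ps_const_def fun_eq_iff)
  then show ?thesis by (simp add: lift2_F_def lift1_F_def pull2_sw sw_add sw_X sw_Y)
qed

lemma homog_zero_sw: "homog_zero (sw f) k = homog_zero f k"
  unfolding homog_zero_def sw_def by (metis diff_diff_cancel diff_le_self)

lemma homog_eval_sw: "homog_eval (sw f) k 1 0 = f 0 k"
proof -
  have "homog_eval (sw f) k 1 0 = (\<Sum>i\<le>k. if i = k then f 0 k else 0)"
    unfolding homog_eval_def sw_def by (intro sum.cong refl) auto
  then show ?thesis by simp
qed
lemma homog_eval_01: "homog_eval f k 0 1 = f 0 k"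
proof -
  have "homog_eval f k 0 1 = (\<Sum>i\<le>k. if i = 0 then f 0 k else 0)"
    unfolding homog_eval_def by (intro sum.cong refl) auto
  then show ?thesis by simp
qed

lemma char_sw: "char_direction p q 0 1 \<Longrightarrow> char_direction (sw q) (sw p) 1 0"
  unfolding char_direction_def homog_zero_sw homog_eval_sw homog_eval_01 by auto

theorem mainTheorem4:
  fixes p q a b :: ps2
  assumes "ps_order_ge p 2" and "ps_order_ge q 2"
    and "ps_convergent p" and "ps_convergent q"
    and "ps_order_ge a 2" and "ps_order_ge b 2"
    and "vf_exp a b ps_X = ps_add ps_X p"
    and "vf_exp a b ps_Y = ps_add ps_Y q"
  shows "(\<forall>c. char_direction p q 1 c \<longrightarrow>
            vf_exp (fst (lift1_X c a b)) (snd (lift1_X c a b)) ps_X = fst (lift1_F c p q) \<and>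
            vf_exp (fst (lift1_X c a b)) (snd (lift1_X c a b)) ps_Y = snd (lift1_F c p q))
       \<and> (char_direction p q 0 1 \<longrightarrow>
            vf_exp (fst (lift2_X a b)) (snd (lift2_X a b)) ps_X = fst (lift2_F p q) \<and>
            vf_exp (fst (lift2_X a b)) (snd (lift2_X a b)) ps_Y = snd (lift2_F p q))"
proof (intro conjI allI impI)
  fix c assume "char_direction p q 1 c"
  note r = chart1[OF assms(1,2,5,6,7,8) this]
  show "vf_exp (fst (lift1_X c a b)) (snd (lift1_X c a b)) ps_X = fst (lift1_F c p q)" using r by blast
  show "vf_exp (fst (lift1_X c a b)) (snd (lift1_X c a b)) ps_Y = snd (lift1_F c p q)" using r by blast
next
  assume ch: "char_direction p q 0 1"
  have ex': "vf_exp (sw b) (sw a) ps_X = ps_add ps_X (sw q)"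
    using arg_cong[OF assms(8), of sw] by (simp add: sw_vf_exp[symmetric] sw_Y sw_add sw_X)
  have ey': "vf_exp (sw b) (sw a) ps_Y = ps_add ps_Y (sw p)"
    using arg_cong[OF assms(7), of sw] by (simp add: sw_vf_exp[symmetric] sw_Y sw_add sw_X)
  note r = chart1[of "sw q" "sw p" "sw b" "sw a", unfolded sw_order, OF assms(2,1,6,5) ex' ey' char_sw[OF ch]]
  show "vf_exp (fst (lift2_X a b)) (snd (lift2_X a b)) ps_X = fst (lift2_F p q)"
    using r by (simp add: lift2_X_sw lift2_F_sw)
  show "vf_exp (fst (lift2_X a b)) (snd (lift2_X a b)) ps_Y = snd (lift2_F p q)"
    using r by (simp add: lift2_X_sw lift2_F_sw)
qed

end
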